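(* Let $\hat k \ge k$ and let $(\hat g, \hat q) \in \mathcal{G} \times \mathcal{Q}$ be a minimizer of $$\min_{\hat g \in \mathcal{G},\, \hat q \in \mathcal{Q}} \; \mathbb{E}_{(x,x') \sim p(x,x')}\Big[\sum_{\hat a \in \hat{\mathcal{A}}} \hat q(\hat a \mid x, x')\,\|x' - \hat g(x,\hat a)\|_2^2 + \beta\, H(\hat q(\cdot \mid x, x'))\Big],$$ where $\beta>0$. For $(x,a) \in \mathrm{supp}[p(x,a)]$ and $\hat a \in \hat{\mathcal A}$, put $v(\hat a \mid x, a) := \hat q(\hat a \mid x, g(x,a))$. Then: 1. If Assumptions A1 and A2 hold, there is a function $v : \mathrm{supp}[p(x,a)] \to \hat{\mathcal A}$ such that for all $(x,a) \in \mathrm{supp}[p(x,a)]$ and all $\hat a\in\hat{\mathcal A}$, $v(\hat a \mid x,a) = \mathbf{1}(\hat a = v(x,a))$. 2. If Assumptions A1, A2 and A3 hold, there is a map $v : \mathrm{supp}[p(a)] \to \hat{\mathcal A}$ such that for all $(x,a) \in \mathrm{supp}[p(x,a)]$ and all $\hat a\in\hat{\mathcal A}$, $v(\hat a \mid x,a) = \mathbf{1}(\hat a = v(a))$. 3. If Assumptions A1, A2, A3 and A4 hold, the map $v : \mathrm{supp}[p(a)] \to \hat{\mathcal A}$ from part 2 is injective.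
   Context: Data-generating process: $\mathcal X := [0,1]^d$, $\mathcal X' := [0,1]^{d'}$, $\mathcal A := \{1,\dots,k\}$. A state $x \in \mathcal X$ is drawn from a Lebesgue density $p(x)$ on $\mathcal X$. An action is then drawn as $a \sim \pi(a \mid x)$, where $\pi(\cdot\mid x)$ is a probability mass function on $\mathcal A$. The next observation is $x' = g(x,a)$ for a fixed function $g : \mathcal X \times \mathcal A \to \mathcal X'$. Write $p(x,a) := p(x)\pi(a\mid x)$, $p(a) := \int p(x,a)\,dx$, and $p(x\mid a) := p(x,a)/p(a)$ when $p(a)>0$. Let $p(x,x')$ denote the joint law of $(x, g(x,a))$ under this process, so $\mathbb E_{p(x,x')}[h(x,x')] = \mathbb E_{p(x,a)}[h(x,g(x,a))]$. Supports: $\mathrm{supp}[p(a)] := \{a \in \mathcal A : p(a)>0\}$. For $a \in \mathrm{supp}[p(a)]$, $\mathrm{supp}[p(x\mid a)]$ is the set of $x_0 \in \mathcal X$ such that every open neighborhood $U$ of $x_0$ satisfies $\int_U p(x\mid a)\,dx > 0$. Also $\mathrm{supp}[p(x,a)] := \bigcup_{a \in \mathrm{supp}[p(a)]} \mathrm{supp}[p(x\mid a)] \times \{a\}$. Hypothesis spaces: $\hat{\mathcal A} := \{1,\dots,\hat k\}$. $\mathcal G$ is the set of functions $\hat g : \mathcal X \times \hat{\mathcal A} \to \mathcal X'$ such that $x \mapsto \hat g(x,\hat a)$ is continuous for every $\hat a \in \hat{\mathcal A}$. $\mathcal Q$ is the set of functions $\hat q : \hat{\mathcal A} \times \mathcal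 X \times \mathcal X' \to [0,1]$ such that: (i) $\sum_{\hat a \in \hat{\mathcal A}} \hat q(\hat a \mid x,x') = 1$ for all $(x,x')$; (ii) $(x,x') \mapsto \hat q(\hat a \mid x, x')$ is continuous for every $\hat a$. Entropy: $H(\hat q(\cdot\mid x,x')) := -\sum_{\hat a} \hat q(\hat a\mid x,x')\log \hat q(\hat a \mid x,x')$, with the convention $0\log 0 = 0$. Assumptions: A1 (continuity): for all $a\in\mathcal A$, $x \mapsto g(x,a)$ is continuous. A2 (injectivity): for all $x \in \mathcal X$ and $a_1 \ne a_2$ in $\mathcal A$, $g(x,a_1) \ne g(x,a_2)$. A3: for every $a \in \mathrm{supp}[p(a)]$, $\mathrm{supp}[p(x\mid a)]$ is a connected subset of $\mathcal X$. A4: for all $a_1,a_2 \in \mathrm{supp}[p(a)]$, $\mathrm{supp}[p(x\mid a_1)] \cap \mathrm{supp}[p(x\mid a_2)] \ne \emptyset$. *)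

theory Defs
  imports "HOL-Analysis.Analysis"
begin

definition unit_cube :: "(real ^ 'n) set" where
  "unit_cube = {x. \<forall>i. 0 \<le> x $ i \<and> x $ i \<le> 1}"

text \<open>Data-generating process: density p on X, policy pi x a = pi(a|x), actions {1..k}.\<close>
definition is_density :: "(real ^ 'd \<Rightarrow> real) \<Rightarrow> bool" where
  "is_density p \<longleftrightarrow> p \<in> borel_measurable lborel \<and> (\<forall>x\<in>unit_cube. 0 \<le> p x)
     \<and> set_integrable lborel unit_cube p \<and> (LINT x:unit_cube|lborel. p x) = 1"

definition is_policy :: "nat \<Rightarrow> (real ^ 'd \<Rightarrow> nat \<Rightarrow> real) \<Rightarrow> bool" where
  "is_policy k \<pi> \<longleftrightarrow> (\<forall>a. (\<lambda>x. \<pi> x a) \<in> borel_measurable lborel)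
     \<and> (\<forall>x\<in>unit_cube. (\<forall>a\<in>{1..k}. 0 \<le> \<pi> x a) \<and> (\<Sum>a\<in>{1..k}. \<pi> x a) = 1)"

definition marg_a :: "(real ^ 'd \<Rightarrow> real) \<Rightarrow> (real ^ 'd \<Rightarrow> nat \<Rightarrow> real) \<Rightarrow> nat \<Rightarrow> real" where
  "marg_a p \<pi> a = (LINT x:unit_cube|lborel. p x * \<pi> x a)"

definition supp_a :: "(real ^ 'd \<Rightarrow> real) \<Rightarrow> (real ^ 'd \<Rightarrow> nat \<Rightarrow> real) \<Rightarrow> nat \<Rightarrow> nat set" where
  "supp_a p \<pi> k = {a \<in> {1..k}. marg_a p \<pi> a > 0}"

definition cond_dens :: "(real ^ 'd \<Rightarrow> real) \<Rightarrow> (real ^ 'd \<Rightarrow> nat \<Rightarrow> real) \<Rightarrow> nat \<Rightarrow> real ^ 'd \<Rightarrow> real" where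
  "cond_dens p \<pi> a x = p x * \<pi> x a / marg_a p \<pi> a"

definition supp_x_given_a :: "(real ^ 'd \<Rightarrow> real) \<Rightarrow> (real ^ 'd \<Rightarrow> nat \<Rightarrow> real) \<Rightarrow> nat \<Rightarrow> (real ^ 'd) set" where
  "supp_x_given_a p \<pi> a = {x0 \<in> unit_cube. \<forall>U. open U \<and> x0 \<in> U \<longrightarrow>
      (LINT x:(U \<inter> unit_cube)|lborel. cond_dens p \<pi> a x) > 0}"

definition supp_xa :: "(real ^ 'd \<Rightarrow> real) \<Rightarrow> (real ^ 'd \<Rightarrow> nat \<Rightarrow> real) \<Rightarrow> nat \<Rightarrow> ((real ^ 'd) \<times> nat) set" where
  "supp_xa p \<pi> k = (\<Union>a\<in>supp_a p \<pi> k. supp_x_given_a p \<pi> a \<times> {a})"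

definition entropy :: "nat \<Rightarrow> (nat \<Rightarrow> real) \<Rightarrow> real" where
  "entropy kh q = - (\<Sum>ah\<in>{1..kh}. if q ah = 0 then 0 else q ah * ln (q ah))"

definition G_space :: "nat \<Rightarrow> (real ^ 'd \<Rightarrow> nat \<Rightarrow> real ^ 'e) set" where
  "G_space kh = {gh. (\<forall>ah\<in>{1..kh}. continuous_on unit_cube (\<lambda>x. gh x ah))
                    \<and> (\<forall>x\<in>unit_cube. \<forall>ah\<in>{1..kh}. gh x ah \<in> unit_cube)}"

definition Q_space :: "nat \<Rightarrow> (nat \<Rightarrow> real ^ 'd \<Rightarrow> real ^ 'e \<Rightarrow> real) set" where
  "Q_space kh = {qh. (\<forall>ah\<in>{1..kh}. \<forall>x\<in>unit_cube. \<forall>x'\<in>unit_cube. 0 \<le> qh ah x x' \<and> qh ah x x' \<le> 1)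
     \<and> (\<forall>x\<in>unit_cube. \<forall>x'\<in>unit_cube. (\<Sum>ah\<in>{1..kh}. qh ah x x') = 1)
     \<and> (\<forall>ah\<in>{1..kh}. continuous_on (unit_cube \<times> unit_cube) (\<lambda>(x, x'). qh ah x x'))}"

text \<open>The objective E_{p(x,x')}[...] written as E_{p(x,a)}[... with x' = g(x,a)].\<close>
definition objective ::
  "(real ^ 'd \<Rightarrow> real) \<Rightarrow> (real ^ 'd \<Rightarrow> nat \<Rightarrow> real) \<Rightarrow> nat \<Rightarrow> (real ^ 'd \<Rightarrow> nat \<Rightarrow> real ^ 'e)
   \<Rightarrow> nat \<Rightarrow> real \<Rightarrow> (real ^ 'd \<Rightarrow> nat \<Rightarrow> real ^ 'e) \<Rightarrow> (nat \<Rightarrow> real ^ 'd \<Rightarrow> real ^ 'e \<Rightarrow> real) \<Rightarrow> real" where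
  "objective p \<pi> k g kh \<beta> gh qh =
     (\<Sum>a\<in>{1..k}. LINT x:unit_cube|lborel. p x * \<pi> x a *
        ((\<Sum>ah\<in>{1..kh}. qh ah x (g x a) * (norm (g x a - gh x ah))\<^sup>2)
         + \<beta> * entropy kh (\<lambda>ah. qh ah x (g x a))))"

definition A1 :: "nat \<Rightarrow> (real ^ 'd \<Rightarrow> nat \<Rightarrow> real ^ 'e) \<Rightarrow> bool" where
  "A1 k g \<longleftrightarrow> (\<forall>a\<in>{1..k}. continuous_on unit_cube (\<lambda>x. g x a))"

definition A2 :: "nat \<Rightarrow> (real ^ 'd \<Rightarrow> nat \<Rightarrow> real ^ 'e) \<Rightarrow> bool" where
  "A2 k g \<longleftrightarrow> (\<forall>x\<in>unit_cube. \<forall>a1\<in>{1..k}. \<forall>a2\<in>{1..k}. a1 \<noteq> a2 \<longrightarrow> g x a1 \<noteq> g x a2)"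

definition A3 :: "(real ^ 'd \<Rightarrow> real) \<Rightarrow> (real ^ 'd \<Rightarrow> nat \<Rightarrow> real) \<Rightarrow> nat \<Rightarrow> bool" where
  "A3 p \<pi> k \<longleftrightarrow> (\<forall>a\<in>supp_a p \<pi> k. connected (supp_x_given_a p \<pi> a))"

definition A4 :: "(real ^ 'd \<Rightarrow> real) \<Rightarrow> (real ^ 'd \<Rightarrow> nat \<Rightarrow> real) \<Rightarrow> nat \<Rightarrow> bool" where
  "A4 p \<pi> k \<longleftrightarrow> (\<forall>a1\<in>supp_a p \<pi> k. \<forall>a2\<in>supp_a p \<pi> k.
      supp_x_given_a p \<pi> a1 \<inter> supp_x_given_a p \<pi> a2 \<noteq> {})"

end

theory Submission
  imports Defs "HOL-Real_Asymp.Real_Asymp"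
begin


lemma xlnx_cont: "continuous_on {0..} (\<lambda>t::real. t * ln t)"
proof (clarsimp simp: continuous_on_eq_continuous_within)
  fix t :: real assume t: "0 \<le> t"
  show "continuous (at t within {0..}) (\<lambda>t. t * ln t)"
  proof (cases "t = 0")
    case True
    have "((\<lambda>t::real. t * ln t) \<longlongrightarrow> 0) (at_right 0)" by real_asymp
    moreover have "at (0::real) within {0..} = at_right 0"
    proof -
      have "{0::real..} - {0} = {0<..}" "{0::real<..} - {0} = {0<..}" by auto
      then show ?thesis by (simp add: at_within_def)
    qed
    ultimately have "((\<lambda>t::real. t * ln t) \<longlongrightarrow> 0) (at 0 within {0..})" by simp
    then show ?thesis using True by (simp add: continuous_within)
  next
    case False
    then have "isCont (\<lambda>t. t * ln t) t" using t by (auto intro!: continuous_intros)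
    then show ?thesis by (simp add: continuous_at_imp_continuous_within)
  qed
qed

lemma cube_cbox: "(unit_cube :: (real^'n) set) = cbox 0 1"
  by (auto simp: unit_cube_def mem_box_cart)

lemma cube_props: "compact (unit_cube :: (real^'n) set)" "closed (unit_cube :: (real^'n) set)"
  "(unit_cube :: (real^'n) set) \<noteq> {}" "(unit_cube :: (real^'n) set) \<in> sets borel"
  "(unit_cube :: (real^'n) set) \<in> sets lborel"
  by (auto simp: cube_cbox mem_box_cart simp flip: ex_in_conv intro!: exI[of _ 0])

lemma entropy_nonneg_term: "0 \<le> t \<Longrightarrow> t \<le> 1 \<Longrightarrow> (if t = 0 then 0 else t * ln t) \<le> (0::real)"
  by (auto simp: mult_nonneg_nonpos)

lemma onehot:
  fixes q :: "nat \<Rightarrow> real"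
  assumes "\<forall>ah\<in>{1..kh}. 0 \<le> q ah \<and> q ah \<le> 1" "(\<Sum>ah\<in>{1..kh}. q ah) = 1" "entropy kh q = 0"
  shows "\<exists>v\<in>{1..kh}. \<forall>ah\<in>{1..kh}. q ah = (if ah = v then 1 else 0)"
proof -
  have z: "\<forall>ah\<in>{1..kh}. (if q ah = 0 then 0 else q ah * ln (q ah)) = 0"
    using assms(3) unfolding entropy_def
    using sum_nonneg_eq_0_iff[of "{1..kh}" "\<lambda>ah. - (if q ah = 0 then 0 else q ah * ln (q ah))"]
      entropy_nonneg_term assms(1) by (auto simp: sum_negf)
  have b: "\<forall>ah\<in>{1..kh}. q ah = 0 \<or> q ah = 1"
  proof
    fix ah assume ah: "ah \<in> {1..kh}"
    show "q ah = 0 \<or> q ah = 1"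
    proof (rule ccontr)
      assume "\<not> ?thesis"
      then have "0 < q ah" "q ah < 1" using assms(1) ah by force+
      then have "q ah * ln (q ah) < 0" by (simp add: mult_pos_neg)
      moreover have "q ah * ln (q ah) = 0" using z ah \<open>0 < q ah\<close> by (metis less_irrefl)
      ultimately show False by simp
    qed
  qed
  obtain v where v: "v \<in> {1..kh}" "q v \<noteq> 0"
    using assms(2) by (metis (no_types, lifting) sum.neutral zero_neq_one)
  have "q v = 1" using b v by auto
  have "\<forall>ah\<in>{1..kh}. ah \<noteq> v \<longrightarrow> q ah = 0"
  proof (intro ballI impI)
    fix ah assume ah: "ah \<in> {1..kh}" "ah \<noteq> v"
    have e: "(\<Sum>ah\<in>{1..kh}. q ah) = q v + (\<Sum>x\<in>{1..kh} - {v}. q x)"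
      using v by (simp add: sum.remove)
    have "(\<Sum>x\<in>{1..kh} - {v}. q x) \<ge> q ah"
      using ah assms(1) by (intro member_le_sum) auto
    then show "q ah = 0" using e assms(1,2) ah \<open>q v = 1\<close> by force
  qed
  then show ?thesis using v \<open>q v = 1\<close> by auto
qed


lemma core_zero:
  fixes p :: "real ^ 'd \<Rightarrow> real"
  assumes dens: "is_density p" and pol: "is_policy k \<pi>"
    and x0: "x0 \<in> supp_x_given_a p \<pi> a"
    and Fc: "continuous_on unit_cube F"
    and AEz: "AE x in lborel. x \<in> unit_cube \<longrightarrow> p x * \<pi> x a * F x = 0"
  shows "\<not> F x0 > (0::real)"
proof
  assume F0: "F x0 > 0"
  have x0c: "x0 \<in> unit_cube" using x0 by (simp add: supp_x_given_a_def)
  obtain A where A: "open A" "A \<inter> unit_cube = F -` {0<..} \<inter> unit_cube"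
    using Fc unfolding continuous_on_open_invariant by (meson open_greaterThan)
  have x0A: "x0 \<in> A" using A(2) x0c F0 by auto
  have pos: "(LINT x:(A \<inter> unit_cube)|lborel. cond_dens p \<pi> a x) > 0"
    using x0 A(1) x0A by (simp add: supp_x_given_a_def)
  have pm[measurable]: "p \<in> borel_measurable lborel" using dens by (simp add: is_density_def)
  have pim[measurable]: "(\<lambda>x. \<pi> x a) \<in> borel_measurable lborel" using pol by (simp add: is_policy_def)
  have Am[measurable]: "A \<inter> unit_cube \<in> sets lborel" using A(1) cube_props(5) by auto
  have "(LINT x:(A \<inter> unit_cube)|lborel. cond_dens p \<pi> a x) = integral\<^sup>L lborel (\<lambda>x::real^'d. 0::real)"
    unfolding set_lebesgue_integral_def
  proof (rule integral_cong_AE)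
    show "(\<lambda>x. indicat_real (A \<inter> unit_cube) x *\<^sub>R cond_dens p \<pi> a x) \<in> borel_measurable lborel"
      unfolding cond_dens_def by measurable
    show "(\<lambda>x. 0::real) \<in> borel_measurable lborel" by simp
    show "AE x in lborel. indicat_real (A \<inter> unit_cube) x *\<^sub>R cond_dens p \<pi> a x = 0"
      using AEz
    proof eventually_elim
      case (elim x)
      show ?case
      proof (cases "x \<in> A \<inter> unit_cube")
        case True
        then have "F x > 0" using A(2) by auto
        then have "p x * \<pi> x a = 0" using elim True by auto
        then show ?thesis by (simp add: cond_dens_def)
      qed simp
    qed
  qed
  then show False using pos by simp
qed

lemma integrable_cube:
  fixes p :: "real ^ 'd \<Rightarrow> real" and \<pi> :: "real ^ 'd \<Rightarrow> nat \<Rightarrow> real" and F :: "real ^ 'd \<Rightarrow> real"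
  assumes dens: "is_density p" and pol: "is_policy k \<pi>" and a: "a \<in> {1..k}"
    and Fc: "continuous_on unit_cube F"
  shows "integrable lborel (\<lambda>x. indicator unit_cube x *\<^sub>R (p x * \<pi> x a * (F x::real)))"
proof -
  have pm[measurable]: "p \<in> borel_measurable lborel" using dens by (simp add: is_density_def)
  have pim[measurable]: "(\<lambda>x. \<pi> x a) \<in> borel_measurable lborel" using pol by (simp add: is_policy_def)
  obtain M where M: "\<forall>x\<in>unit_cube. norm (F x) \<le> M"
    using compact_imp_bounded[OF compact_continuous_image[OF Fc cube_props(1)]]
    unfolding bounded_iff by auto
  have pint: "integrable lborel (\<lambda>x. indicator unit_cube x *\<^sub>R p x)"
    using dens by (simp add: is_density_def set_integrable_def)
  have Fm: "(\<lambda>x. indicator unit_cube x *\<^sub>R F x) \<in> borel_measurable lborel"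
    using borel_measurable_continuous_on_indicator[OF cube_props(4) Fc]
    by (simp add: measurable_lborel2)
  have pib: "\<forall>x\<in>unit_cube. 0 \<le> \<pi> x a \<and> \<pi> x a \<le> 1"
  proof
    fix x :: "real^'d" assume x: "x \<in> unit_cube"
    have nn: "\<forall>b\<in>{1..k}. 0 \<le> \<pi> x b" and s: "(\<Sum>b\<in>{1..k}. \<pi> x b) = 1"
      using pol x by (auto simp: is_policy_def)
    have "\<pi> x a \<le> (\<Sum>b\<in>{1..k}. \<pi> x b)" using a nn by (intro member_le_sum) auto
    then show "0 \<le> \<pi> x a \<and> \<pi> x a \<le> 1" using s nn a by auto
  qed
  have fint: "integrable lborel (\<lambda>x. indicator unit_cube x *\<^sub>R p x * M)" using pint by simp
  show ?thesis
  proof (rule Bochner_Integration.integrable_bound[OF fint])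
    have "(\<lambda>x. indicator unit_cube x *\<^sub>R (p x * \<pi> x a * F x)) =
          (\<lambda>x. (indicator unit_cube x *\<^sub>R F x) * p x * \<pi> x a)"
      by (auto simp: indicator_def fun_eq_iff)
    then show "(\<lambda>x. indicator unit_cube x *\<^sub>R (p x * \<pi> x a * F x)) \<in> borel_measurable lborel"
      using Fm by simp
    show "AE x in lborel. norm (indicator unit_cube x *\<^sub>R (p x * \<pi> x a * F x))
        \<le> norm (indicator unit_cube x *\<^sub>R p x * M)"
    proof (rule AE_I2)
      fix x show "norm (indicator unit_cube x *\<^sub>R (p x * \<pi> x a * F x))
        \<le> norm (indicator unit_cube x *\<^sub>R p x * M)"
      proof (cases "x \<in> unit_cube")
        case True
        have p0: "0 \<le> p x" using dens True by (simp add: is_density_def)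
        have "\<bar>p x * \<pi> x a * F x\<bar> = p x * \<pi> x a * \<bar>F x\<bar>"
          using p0 pib True by (simp add: abs_mult)
        also have "\<dots> \<le> p x * 1 * M"
          using p0 pib True M by (intro mult_mono) auto
        also have "\<dots> \<le> \<bar>p x * M\<bar>" by simp
        finally show ?thesis using True by simp
      qed simp
    qed
  qed
qed



lemma finite_min_pos:
  assumes "finite D" "\<forall>d\<in>D. \<exists>e>0. \<forall>x\<in>S. e \<le> (f d x::real)"
  shows "\<exists>e>0. \<forall>d\<in>D. \<forall>x\<in>S. e \<le> f d x"
  using assms
proof (induction D rule: finite_induct)
  case empty then show ?case by (auto intro: exI[of _ 1])
next
  case (insert d D)
  then obtain e1 where e1: "e1 > 0" "\<forall>d\<in>D. \<forall>x\<in>S. e1 \<le> f d x" by auto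
  obtain e2 where e2: "e2 > 0" "\<forall>x\<in>S. e2 \<le> f d x" using insert.prems by auto
  show ?case using e1 e2 by (intro exI[of _ "min e1 e2"]) force
qed

lemma sep_delta:
  fixes g :: "real^'d \<Rightarrow> nat \<Rightarrow> real^'e"
  assumes a1: "A1 k g" and a2: "A2 k g"
  shows "\<exists>\<delta>>0. \<forall>a\<in>{1..k}. \<forall>b\<in>{1..k}. a \<noteq> b \<longrightarrow> (\<forall>x\<in>unit_cube. 2 * \<delta> \<le> norm (g x a - g x b))"
proof -
  let ?D = "{(a,b). a \<in> {1..k} \<and> b \<in> {1..k} \<and> a \<noteq> b}"
  have fin: "finite ?D" by (rule finite_subset[of _ "{1..k} \<times> {1..k}"]) auto
  have "\<forall>d\<in>?D. \<exists>e>0. \<forall>x\<in>unit_cube. e \<le> norm (g x (fst d) - g x (snd d))"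
  proof
    fix d assume d: "d \<in> ?D"
    then obtain a b where ab: "d = (a,b)" "a \<in> {1..k}" "b \<in> {1..k}" "a \<noteq> b" by auto
    have c: "continuous_on unit_cube (\<lambda>x. norm (g x a - g x b))"
      using a1 ab by (auto simp: A1_def intro!: continuous_intros)
    obtain x0 where x0: "x0 \<in> unit_cube" "\<forall>y\<in>unit_cube. norm (g x0 a - g x0 b) \<le> norm (g y a - g y b)"
      using continuous_attains_inf[OF cube_props(1) cube_props(3) c] by auto
    have "norm (g x0 a - g x0 b) > 0" using a2 ab x0 by (auto simp: A2_def)
    then show "\<exists>e>0. \<forall>x\<in>unit_cube. e \<le> norm (g x (fst d) - g x (snd d))"
      using x0 ab by (intro exI[of _ "norm (g x0 a - g x0 b)"]) auto
  qed
  from finite_min_pos[OF fin this] obtain e where e: "e > 0"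
    "\<forall>d\<in>?D. \<forall>x\<in>unit_cube. e \<le> norm (g x (fst d) - g x (snd d))" by blast
  show ?thesis using e by (intro exI[of _ "e/2"]) force
qed

lemma construction:
  fixes g :: "real^'d \<Rightarrow> nat \<Rightarrow> real^'e" and p :: "real^'d \<Rightarrow> real" and \<pi> :: "real^'d \<Rightarrow> nat \<Rightarrow> real"
  assumes a1: "A1 k g" and a2: "A2 k g"
    and g_range: "\<forall>x\<in>unit_cube. \<forall>a\<in>{1..k}. g x a \<in> unit_cube"
    and k1: "1 \<le> k" and kh: "k \<le> kh"
  shows "\<exists>g'\<in>G_space kh. \<exists>q'\<in>Q_space kh. objective p \<pi> k g kh \<beta> g' q' = 0"
proof -
  obtain \<delta> :: real where dpos: "\<delta> > 0" and sep: "\<forall>a\<in>{1..k}. \<forall>b\<in>{1..k}. a \<noteq> b \<longrightarrow>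
      (\<forall>x\<in>unit_cube. 2 * \<delta> \<le> norm (g x a - g x b))"
    using sep_delta[OF a1 a2] by blast
  define w where "w b x x' = max 0 (1 - norm (x' - g x b) / \<delta>)" for b x and x' :: "real^'e"
  define S where "S x x' = (\<Sum>b\<in>{2..k}. w b x x')" for x x'
  define q' where "q' ah x x' = (if ah = 1 then 1 - S x x' else if ah \<le> k then w ah x x' else 0)" for ah x x'
  define g' where "g' x ah = g x (if ah \<le> k then ah else 1)" for x ah
  have w01: "0 \<le> w b x x' \<and> w b x x' \<le> 1" for b x x'
    using dpos by (auto simp: w_def)
  have wpos: "w b x x' > 0 \<longleftrightarrow> norm (x' - g x b) < \<delta>" for b x x'
    using dpos by (auto simp: w_def less_max_iff_disj divide_less_eq)
  have wuniq: "w b x x' = 0" if "x \<in> unit_cube" "b \<in> {1..k}" "c \<in> {1..k}" "b \<noteq> c" "w c x x' > 0" for b c x x'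
  proof (rule ccontr)
    assume "w b x x' \<noteq> 0"
    then have "norm (x' - g x b) < \<delta>" "norm (x' - g x c) < \<delta>" using w01[of b x x'] wpos that by force+
    then have "norm (g x c - g x b) < 2 * \<delta>" using norm_triangle_lt[of "g x c - x'" "x' - g x b"]
      by (simp add: norm_minus_commute)
    moreover have "2 * \<delta> \<le> norm (g x c - g x b)" using sep that by auto
    ultimately show False by simp
  qed
  have S01: "0 \<le> S x x' \<and> S x x' \<le> 1" if x: "x \<in> unit_cube" for x x'
  proof (cases "\<exists>b\<in>{2..k}. w b x x' > 0")
    case True
    then obtain b where b: "b \<in> {2..k}" "w b x x' > 0" by auto
    have "S x x' = w b x x' + (\<Sum>c\<in>{2..k} - {b}. w c x x')" unfolding S_def using b by (simp add: sum.remove)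
    also have "(\<Sum>c\<in>{2..k} - {b}. w c x x') = 0" using wuniq[OF x, of _ b] b by (intro sum.neutral) auto
    finally show ?thesis using w01[of b x x'] by simp
  next
    case False
    then have "S x x' = 0" unfolding S_def using w01 by (intro sum.neutral) (metis less_eq_real_def)
    then show ?thesis by simp
  qed
  have sumq: "(\<Sum>ah\<in>{1..kh}. q' ah x x') = 1" for x x'
  proof -
    have "{1..kh} = insert 1 {2..kh}" using kh k1 by auto
    then have "(\<Sum>ah\<in>{1..kh}. q' ah x x') = q' 1 x x' + (\<Sum>ah\<in>{2..kh}. q' ah x x')" by simp
    also have "(\<Sum>ah\<in>{2..kh}. q' ah x x') = (\<Sum>ah\<in>{2..kh}. if ah \<le> k then w ah x x' else 0)"
      by (intro sum.cong) (auto simp: q'_def)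
    also have "\<dots> = (\<Sum>ah\<in>{ah\<in>{2..kh}. ah \<le> k}. w ah x x')" by (rule sum.inter_filter[symmetric]) simp
    also have "{ah\<in>{2..kh}. ah \<le> k} = {2..k}" using kh by auto
    finally show ?thesis by (simp add: q'_def S_def)
  qed
  have wc: "continuous_on (unit_cube \<times> unit_cube) (\<lambda>z. w b (fst z) (snd z))" if b: "b \<in> {1..k}" for b
  proof -
    have gc: "continuous_on (unit_cube \<times> unit_cube) (\<lambda>z. g (fst z) b)"
      using a1 b unfolding A1_def
      by (intro continuous_on_compose2[of unit_cube "\<lambda>x. g x b" _ fst]) (auto intro: continuous_intros)
    show ?thesis unfolding w_def using gc dpos by (intro continuous_intros) auto
  qed
  have qin: "q' \<in> Q_space kh"
    unfolding Q_space_def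
  proof (intro CollectI conjI ballI)
    fix ah x x' assume ah: "ah \<in> {1..kh}" and x: "x \<in> (unit_cube :: (real^'d) set)" and x': "x' \<in> (unit_cube :: (real^'e) set)"
    show "0 \<le> q' ah x x'" "q' ah x x' \<le> 1" using S01[OF x, of x'] w01[of ah x x'] by (auto simp: q'_def)
  next
    fix x x' show "(\<Sum>ah\<in>{1..kh}. q' ah x x') = 1" by (rule sumq)
  next
    fix ah assume ah: "ah \<in> {1..kh}"
    have "continuous_on (unit_cube \<times> unit_cube) (\<lambda>z. q' ah (fst z) (snd z))"
    proof (cases "ah = 1")
      case True
      then show ?thesis unfolding q'_def S_def using wc
        by (auto intro!: continuous_intros continuous_on_sum)
    next
      case False
      then show ?thesis unfolding q'_def using wc ah by (cases "ah \<le> k") (auto intro!: continuous_intros)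
    qed
    then show "continuous_on (unit_cube \<times> unit_cube) (\<lambda>(x, x'). q' ah x x')"
      by (simp add: case_prod_unfold)
  qed
  have gin: "g' \<in> G_space kh"
    unfolding G_space_def g'_def using a1 g_range k1
    by (auto simp: A1_def)
  have qgraph: "q' ah x (g x a) = (if ah = a then 1 else 0)"
    if x: "x \<in> unit_cube" and a: "a \<in> {1..k}" and ah: "ah \<in> {1..kh}" for x a ah
  proof -
    have wa: "w b x (g x a) = (if b = a then 1 else 0)" if b: "b \<in> {1..k}" for b
    proof (cases "b = a")
      case True then show ?thesis by (simp add: w_def)
    next
      case False
      have "w a x (g x a) = 1" by (simp add: w_def)
      then show ?thesis using wuniq[OF x b a False] False by simp
    qed
    have Sa: "S x (g x a) = (if a \<ge> 2 then 1 else 0)"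
    proof -
      have "S x (g x a) = (\<Sum>b\<in>{2..k}. if b = a then 1 else 0)"
        unfolding S_def by (intro sum.cong) (auto simp: wa)
      also have "\<dots> = (if a \<ge> 2 then 1 else 0)" using a by simp
      finally show ?thesis .
    qed
    show ?thesis using Sa a ah wa[of ah] by (auto simp: q'_def)
  qed
  have zero: "objective p \<pi> k g kh \<beta> g' q' = 0"
    unfolding objective_def
  proof (intro sum.neutral ballI)
    fix a assume a: "a \<in> {1..k}"
    have "(LINT x:unit_cube|lborel. p x * \<pi> x a *
        ((\<Sum>ah\<in>{1..kh}. q' ah x (g x a) * (norm (g x a - g' x ah))\<^sup>2)
         + \<beta> * entropy kh (\<lambda>ah. q' ah x (g x a)))) = (LINT (x::real^'d):unit_cube|lborel. (0::real))"
    proof (rule set_lebesgue_integral_cong[OF cube_props(5)], intro allI impI)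
      fix x :: "real^'d" assume x: "x \<in> unit_cube"
      have s1: "(\<Sum>ah\<in>{1..kh}. q' ah x (g x a) * (norm (g x a - g' x ah))\<^sup>2) = 0"
      proof -
        have "(\<Sum>ah\<in>{1..kh}. q' ah x (g x a) * (norm (g x a - g' x ah))\<^sup>2)
           = (\<Sum>ah\<in>{1..kh}. if ah = a then (norm (g x a - g' x ah))\<^sup>2 else 0)"
          by (intro sum.cong) (auto simp: qgraph[OF x a])
        also have "\<dots> = 0" using a kh by (simp add: g'_def)
        finally show ?thesis .
      qed
      have s2: "entropy kh (\<lambda>ah. q' ah x (g x a)) = 0"
        unfolding entropy_def by (auto simp: qgraph[OF x a] intro!: sum.neutral)
      show "p x * \<pi> x a * ((\<Sum>ah\<in>{1..kh}. q' ah x (g x a) * (norm (g x a - g' x ah))\<^sup>2)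
         + \<beta> * entropy kh (\<lambda>ah. q' ah x (g x a))) = 0" using s1 s2 by simp
    qed
    then show "(LINT x:unit_cube|lborel. p x * \<pi> x a *
        ((\<Sum>ah\<in>{1..kh}. q' ah x (g x a) * (norm (g x a - g' x ah))\<^sup>2)
         + \<beta> * entropy kh (\<lambda>ah. q' ah x (g x a)))) = 0" by simp
  qed
  show ?thesis using gin qin zero by blast
qed

theorem theorem1:
  fixes p :: "real ^ 'd \<Rightarrow> real"
    and \<pi> :: "real ^ 'd \<Rightarrow> nat \<Rightarrow> real"
    and g :: "real ^ 'd \<Rightarrow> nat \<Rightarrow> real ^ 'e"
    and gh :: "real ^ 'd \<Rightarrow> nat \<Rightarrow> real ^ 'e"
    and qh :: "nat \<Rightarrow> real ^ 'd \<Rightarrow> real ^ 'e \<Rightarrow> real"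
    and k kh :: nat and \<beta> :: real
  assumes dens: "is_density p"
    and pol: "is_policy k \<pi>"
    and g_range: "\<forall>x\<in>unit_cube. \<forall>a\<in>{1..k}. g x a \<in> unit_cube"
    and beta_pos: "\<beta> > 0"
    and kh_ge: "kh \<ge> k"
    and gh_in: "gh \<in> G_space kh"
    and qh_in: "qh \<in> Q_space kh"
    and minimizer: "\<forall>g'\<in>G_space kh. \<forall>q'\<in>Q_space kh.
        objective p \<pi> k g kh \<beta> gh qh \<le> objective p \<pi> k g kh \<beta> g' q'"
  shows
    "(A1 k g \<and> A2 k g \<longrightarrow>
       (\<exists>v :: real ^ 'd \<Rightarrow> nat \<Rightarrow> nat.
          (\<forall>(x, a)\<in>supp_xa p \<pi> k. v x a \<in> {1..kh}) \<and>
          (\<forall>(x, a)\<in>supp_xa p \<pi> k. \<forall>ah\<in>{1..kh}.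
              qh ah x (g x a) = (if ah = v x a then 1 else 0))))
     \<and> (A1 k g \<and> A2 k g \<and> A3 p \<pi> k \<longrightarrow>
       (\<exists>v :: nat \<Rightarrow> nat.
          (\<forall>a\<in>supp_a p \<pi> k. v a \<in> {1..kh}) \<and>
          (\<forall>(x, a)\<in>supp_xa p \<pi> k. \<forall>ah\<in>{1..kh}.
              qh ah x (g x a) = (if ah = v a then 1 else 0))))
     \<and> (A1 k g \<and> A2 k g \<and> A3 p \<pi> k \<and> A4 p \<pi> k \<longrightarrow>
       (\<forall>v :: nat \<Rightarrow> nat.
          (\<forall>a\<in>supp_a p \<pi> k. v a \<in> {1..kh}) \<and>
          (\<forall>(x, a)\<in>supp_xa p \<pi> k. \<forall>ah\<in>{1..kh}.
              qh ah x (g x a) = (if ah = v a then 1 else 0))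
          \<longrightarrow> inj_on v (supp_a p \<pi> k)))"
proof -
  have qb: "\<forall>ah\<in>{1..kh}. \<forall>x\<in>unit_cube. \<forall>x'\<in>unit_cube. 0 \<le> qh ah x x' \<and> qh ah x x' \<le> 1"
   and qs: "\<forall>x\<in>unit_cube. \<forall>x'\<in>unit_cube. (\<Sum>ah\<in>{1..kh}. qh ah x x') = 1"
   and qc: "\<forall>ah\<in>{1..kh}. continuous_on (unit_cube \<times> unit_cube) (\<lambda>(x, x'). qh ah x x')"
    using qh_in by (auto simp: Q_space_def)
  have ghc: "\<forall>ah\<in>{1..kh}. continuous_on unit_cube (\<lambda>x. gh x ah)"
    using gh_in by (auto simp: G_space_def)
  define F where "F a x = (\<Sum>ah\<in>{1..kh}. qh ah x (g x a) * (norm (g x a - gh x ah))\<^sup>2)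
         + \<beta> * entropy kh (\<lambda>ah. qh ah x (g x a))" for a x
  have ent_alt: "entropy kh q = - (\<Sum>ah\<in>{1..kh}. q ah * ln (q ah))" for q
    unfolding entropy_def by (intro arg_cong[where f=uminus] sum.cong) auto
  have D_nn: "0 \<le> (\<Sum>ah\<in>{1..kh}. qh ah x (g x a) * (norm (g x a - gh x ah))\<^sup>2)"
    if "a \<in> {1..k}" "x \<in> unit_cube" for a x
    using qb g_range that by (intro sum_nonneg) auto
  have E_nn: "0 \<le> entropy kh (\<lambda>ah. qh ah x (g x a))"
    if "a \<in> {1..k}" "x \<in> unit_cube" for a x
  proof -
    have "(\<Sum>ah\<in>{1..kh}. if qh ah x (g x a) = 0 then 0 else qh ah x (g x a) * ln (qh ah x (g x a))) \<le> 0"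
      using qb g_range that entropy_nonneg_term by (intro sum_nonpos) auto
    then show ?thesis unfolding entropy_def by simp
  qed
  have Fnn: "0 \<le> F a x" if "a \<in> {1..k}" "x \<in> unit_cube" for a x
    unfolding F_def using D_nn[OF that] E_nn[OF that] beta_pos by simp
  have qcomp: "continuous_on unit_cube (\<lambda>x. qh ah x (g x a))"
    if a1: "A1 k g" and a: "a \<in> {1..k}" and ah: "ah \<in> {1..kh}" for a ah
  proof -
    have gc: "continuous_on unit_cube (\<lambda>x. g x a)" using a1 a by (simp add: A1_def)
    have "continuous_on unit_cube (\<lambda>x. (\<lambda>(x, x'). qh ah x x') (x, g x a))"
      by (rule continuous_on_compose2[OF qc[rule_format, OF ah]])
         (use gc g_range a in \<open>auto intro!: continuous_intros\<close>)
    then show ?thesis by simp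
  qed
  have Fc: "continuous_on unit_cube (F a)" if a1: "A1 k g" and a: "a \<in> {1..k}" for a
  proof -
    have gc: "continuous_on unit_cube (\<lambda>x. g x a)" using a1 a by (simp add: A1_def)
    have lc: "continuous_on unit_cube (\<lambda>x. qh ah x (g x a) * ln (qh ah x (g x a)))"
      if ah: "ah \<in> {1..kh}" for ah
      by (rule continuous_on_compose2[OF xlnx_cont qcomp[OF a1 a ah]])
         (use qb g_range a ah in auto)
    have s1: "continuous_on unit_cube (\<lambda>x. \<Sum>ah\<in>{1..kh}. qh ah x (g x a) * ln (qh ah x (g x a)))"
      by (rule continuous_on_sum) (use lc in auto)
    have s2: "continuous_on unit_cube (\<lambda>x. \<Sum>ah\<in>{1..kh}. qh ah x (g x a) * (norm (g x a - gh x ah))\<^sup>2)"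
      by (rule continuous_on_sum) (use qcomp[OF a1 a] gc ghc in \<open>auto intro!: continuous_intros\<close>)
    have "F a = (\<lambda>x. (\<Sum>ah\<in>{1..kh}. qh ah x (g x a) * (norm (g x a - gh x ah))\<^sup>2)
        + \<beta> * - (\<Sum>ah\<in>{1..kh}. qh ah x (g x a) * ln (qh ah x (g x a))))"
      unfolding F_def ent_alt by (rule ext) simp
    then show ?thesis using s1 s2 by (auto intro!: continuous_intros)
  qed
  have key: "F a x = 0"
    if a1: "A1 k g" and a2: "A2 k g" and a: "a \<in> supp_a p \<pi> k" and x: "x \<in> supp_x_given_a p \<pi> a" for a x
  proof -
    have ak: "a \<in> {1..k}" using a by (simp add: supp_a_def)
    have xc: "x \<in> unit_cube" using x by (simp add: supp_x_given_a_def)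
    have k1: "1 \<le> k" using ak by simp
    obtain g' q' where g': "g' \<in> G_space kh" and q': "q' \<in> Q_space kh"
      and z: "objective p \<pi> k g kh \<beta> g' q' = 0"
      using construction[OF a1 a2 g_range k1 kh_ge] by blast
    have le: "objective p \<pi> k g kh \<beta> gh qh \<le> 0" using minimizer g' q' z by metis
    define I where "I b = (LINT x:unit_cube|lborel. p x * \<pi> x b * F b x)" for b
    have obj: "objective p \<pi> k g kh \<beta> gh qh = (\<Sum>b\<in>{1..k}. I b)"
      unfolding objective_def I_def F_def by simp
    have Inn: "0 \<le> I b" if b: "b \<in> {1..k}" for b
      unfolding I_def set_lebesgue_integral_def
    proof (rule integral_nonneg_AE, rule AE_I2)
      fix x :: "real^'d"
      show "0 \<le> indicat_real unit_cube x *\<^sub>R (p x * \<pi> x b * F b x)"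
      proof (cases "x \<in> unit_cube")
        case True
        have "0 \<le> p x" using dens True by (simp add: is_density_def)
        moreover have "0 \<le> \<pi> x b" using pol True b by (simp add: is_policy_def)
        ultimately show ?thesis using Fnn[OF b True] True by simp
      qed simp
    qed
    have "I a \<le> (\<Sum>b\<in>{1..k}. I b)" by (rule member_le_sum) (use Inn ak in auto)
    then have "I a = 0" using obj le Inn[OF ak] by linarith
    then have "integral\<^sup>L lborel (\<lambda>x. indicator unit_cube x *\<^sub>R (p x * \<pi> x a * F a x)) = 0"
      by (simp add: I_def set_lebesgue_integral_def)
    moreover have "AE x in lborel. 0 \<le> indicator unit_cube x *\<^sub>R (p x * \<pi> x a * F a x)"
    proof (rule AE_I2)
      fix x :: "real^'d"
      show "0 \<le> indicat_real unit_cube x *\<^sub>R (p x * \<pi> x a * F a x)"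
      proof (cases "x \<in> unit_cube")
        case True
        have "0 \<le> p x" using dens True by (simp add: is_density_def)
        moreover have "0 \<le> \<pi> x a" using pol True ak by (simp add: is_policy_def)
        ultimately show ?thesis using Fnn[OF ak True] True by simp
      qed simp
    qed
    ultimately have "AE x in lborel. indicator unit_cube x *\<^sub>R (p x * \<pi> x a * F a x) = 0"
      using integral_nonneg_eq_0_iff_AE[OF integrable_cube[OF dens pol ak Fc[OF a1 ak]]] by simp
    then have "AE x in lborel. x \<in> unit_cube \<longrightarrow> p x * \<pi> x a * F a x = 0"
    proof eventually_elim
      case (elim x)
      show ?case
      proof
        assume "x \<in> unit_cube"
        then have "indicat_real unit_cube x = 1" by simp
        with elim show "p x * \<pi> x a * F a x = 0" by (metis scaleR_one)
      qed
    qed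
    from core_zero[OF dens pol x Fc[OF a1 ak] this] have "\<not> F a x > 0" .
    then show ?thesis using Fnn[OF ak xc] by simp
  qed
  have onehot_at: "\<exists>v\<in>{1..kh}. \<forall>ah\<in>{1..kh}. qh ah x (g x a) = (if ah = v then 1 else 0)"
    and Dz: "(\<Sum>ah\<in>{1..kh}. qh ah x (g x a) * (norm (g x a - gh x ah))\<^sup>2) = 0"
    if a1: "A1 k g" and a2: "A2 k g" and a: "a \<in> supp_a p \<pi> k" and x: "x \<in> supp_x_given_a p \<pi> a" for a x
  proof -
    have ak: "a \<in> {1..k}" using a by (simp add: supp_a_def)
    have xc: "x \<in> unit_cube" using x by (simp add: supp_x_given_a_def)
    have F0: "F a x = 0" by (rule key[OF a1 a2 a x])
    have d: "0 \<le> (\<Sum>ah\<in>{1..kh}. qh ah x (g x a) * (norm (g x a - gh x ah))\<^sup>2)" by (rule D_nn[OF ak xc])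
    have e: "0 \<le> entropy kh (\<lambda>ah. qh ah x (g x a))" by (rule E_nn[OF ak xc])
    have be: "0 \<le> \<beta> * entropy kh (\<lambda>ah. qh ah x (g x a))"
      using e beta_pos by simp
    have be0: "\<beta> * entropy kh (\<lambda>ah. qh ah x (g x a)) = 0"
      using F0 d be unfolding F_def by linarith
    then have e0: "entropy kh (\<lambda>ah. qh ah x (g x a)) = 0"
      using beta_pos by simp
    show "(\<Sum>ah\<in>{1..kh}. qh ah x (g x a) * (norm (g x a - gh x ah))\<^sup>2) = 0"
      using F0 d be unfolding F_def by linarith
    have gxa: "g x a \<in> unit_cube" using g_range xc ak by auto
    show "\<exists>v\<in>{1..kh}. \<forall>ah\<in>{1..kh}. qh ah x (g x a) = (if ah = v then 1 else 0)"
      by (rule onehot) (use qb qs xc gxa e0 in auto)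
  qed
  have P1: "A1 k g \<and> A2 k g \<longrightarrow>
       (\<exists>v :: real ^ 'd \<Rightarrow> nat \<Rightarrow> nat.
          (\<forall>(x, a)\<in>supp_xa p \<pi> k. v x a \<in> {1..kh}) \<and>
          (\<forall>(x, a)\<in>supp_xa p \<pi> k. \<forall>ah\<in>{1..kh}.
              qh ah x (g x a) = (if ah = v x a then 1 else 0)))"
  proof
    assume A: "A1 k g \<and> A2 k g"
    define v where "v x a = (SOME v. v \<in> {1..kh} \<and> (\<forall>ah\<in>{1..kh}. qh ah x (g x a) = (if ah = v then 1 else 0)))" for x a
    have vp: "v x a \<in> {1..kh} \<and> (\<forall>ah\<in>{1..kh}. qh ah x (g x a) = (if ah = v x a then 1 else 0))"
      if "(x, a) \<in> supp_xa p \<pi> k" for x a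
    proof -
      have xa: "a \<in> supp_a p \<pi> k" "x \<in> supp_x_given_a p \<pi> a" using that by (auto simp: supp_xa_def)
      have "\<exists>v. v \<in> {1..kh} \<and> (\<forall>ah\<in>{1..kh}. qh ah x (g x a) = (if ah = v then 1 else 0))"
        using onehot_at[OF _ _ xa] A by blast
      then show ?thesis unfolding v_def by (rule someI_ex)
    qed
    show "\<exists>v :: real ^ 'd \<Rightarrow> nat \<Rightarrow> nat.
          (\<forall>(x, a)\<in>supp_xa p \<pi> k. v x a \<in> {1..kh}) \<and>
          (\<forall>(x, a)\<in>supp_xa p \<pi> k. \<forall>ah\<in>{1..kh}.
              qh ah x (g x a) = (if ah = v x a then 1 else 0))"
      using vp by (intro exI[of _ v]) auto
  qed
  have P2: "A1 k g \<and> A2 k g \<and> A3 p \<pi> k \<longrightarrow>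
       (\<exists>v :: nat \<Rightarrow> nat.
          (\<forall>a\<in>supp_a p \<pi> k. v a \<in> {1..kh}) \<and>
          (\<forall>(x, a)\<in>supp_xa p \<pi> k. \<forall>ah\<in>{1..kh}.
              qh ah x (g x a) = (if ah = v a then 1 else 0)))"
  proof
    assume A: "A1 k g \<and> A2 k g \<and> A3 p \<pi> k"
    define v0 where "v0 x a = (SOME v. v \<in> {1..kh} \<and> (\<forall>ah\<in>{1..kh}. qh ah x (g x a) = (if ah = v then 1 else 0)))" for x a
    have vp: "v0 x a \<in> {1..kh} \<and> (\<forall>ah\<in>{1..kh}. qh ah x (g x a) = (if ah = v0 x a then 1 else 0))"
      if "a \<in> supp_a p \<pi> k" "x \<in> supp_x_given_a p \<pi> a" for x a
    proof -
      have "\<exists>v. v \<in> {1..kh} \<and> (\<forall>ah\<in>{1..kh}. qh ah x (g x a) = (if ah = v then 1 else 0))"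
        using onehot_at[OF _ _ that] A by blast
      then show ?thesis unfolding v0_def by (rule someI_ex)
    qed
    define v where "v a = (if supp_x_given_a p \<pi> a = {} then 1 else v0 (SOME x. x \<in> supp_x_given_a p \<pi> a) a)" for a
    have const: "qh ah x (g x a) = qh ah y (g y a)"
      if a: "a \<in> supp_a p \<pi> k" and x: "x \<in> supp_x_given_a p \<pi> a" and y: "y \<in> supp_x_given_a p \<pi> a"
        and ah: "ah \<in> {1..kh}" for a x y ah
    proof -
      let ?S = "supp_x_given_a p \<pi> a"
      have ak: "a \<in> {1..k}" using a by (simp add: supp_a_def)
      have conn: "connected ?S" using A a by (simp add: A3_def)
      have sub: "?S \<subseteq> unit_cube" by (auto simp: supp_x_given_a_def)
      have c: "continuous_on ?S (\<lambda>x. qh ah x (g x a))"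
        using qcomp[OF _ ak ah] A continuous_on_subset[OF _ sub] by blast
      have v01: "qh ah z (g z a) = 0 \<or> qh ah z (g z a) = 1" if "z \<in> ?S" for z
        using vp[OF a that] ah by auto
      have "(\<lambda>x. qh ah x (g x a)) constant_on ?S"
      proof (rule continuous_discrete_range_constant[OF conn c])
        fix z assume z: "z \<in> ?S"
        show "\<exists>e>0. \<forall>y. y \<in> ?S \<and> qh ah y (g y a) \<noteq> qh ah z (g z a) \<longrightarrow>
               e \<le> norm (qh ah y (g y a) - qh ah z (g z a))"
        proof (intro exI[of _ 1] conjI allI impI)
          show "(0::real) < 1" by simp
          fix y assume y: "y \<in> ?S \<and> qh ah y (g y a) \<noteq> qh ah z (g z a)"
          then show "1 \<le> norm (qh ah y (g y a) - qh ah z (g z a))"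
            using v01[OF z] v01[of y] by auto
        qed
      qed
      then show ?thesis using x y by (auto simp: constant_on_def)
    qed
    have vin: "v a \<in> {1..kh}" if a: "a \<in> supp_a p \<pi> k" for a
    proof (cases "supp_x_given_a p \<pi> a = {}")
      case True
      then show ?thesis using a kh_ge by (auto simp: v_def supp_a_def)
    next
      case False
      then have "(SOME x. x \<in> supp_x_given_a p \<pi> a) \<in> supp_x_given_a p \<pi> a" by (metis ex_in_conv someI_ex)
      then show ?thesis using vp[OF a] False by (simp add: v_def)
    qed
    have veq: "qh ah x (g x a) = (if ah = v a then 1 else 0)"
      if xa: "(x, a) \<in> supp_xa p \<pi> k" and ah: "ah \<in> {1..kh}" for x a ah
    proof -
      have a: "a \<in> supp_a p \<pi> k" and x: "x \<in> supp_x_given_a p \<pi> a" using xa by (auto simp: supp_xa_def)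
      define x0 where "x0 = (SOME x. x \<in> supp_x_given_a p \<pi> a)"
      have x0: "x0 \<in> supp_x_given_a p \<pi> a" unfolding x0_def using x by (rule someI)
      have ne: "supp_x_given_a p \<pi> a \<noteq> {}" using x by auto
      have "qh ah x (g x a) = qh ah x0 (g x0 a)" by (rule const[OF a x x0 ah])
      also have "\<dots> = (if ah = v0 x0 a then 1 else 0)" using vp[OF a x0] ah by auto
      finally show ?thesis using ne by (simp add: v_def x0_def)
    qed
    show "\<exists>v :: nat \<Rightarrow> nat.
          (\<forall>a\<in>supp_a p \<pi> k. v a \<in> {1..kh}) \<and>
          (\<forall>(x, a)\<in>supp_xa p \<pi> k. \<forall>ah\<in>{1..kh}.
              qh ah x (g x a) = (if ah = v a then 1 else 0))"
      using vin veq by (intro exI[of _ v]) auto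
  qed
  have P3: "A1 k g \<and> A2 k g \<and> A3 p \<pi> k \<and> A4 p \<pi> k \<longrightarrow>
       (\<forall>v :: nat \<Rightarrow> nat.
          (\<forall>a\<in>supp_a p \<pi> k. v a \<in> {1..kh}) \<and>
          (\<forall>(x, a)\<in>supp_xa p \<pi> k. \<forall>ah\<in>{1..kh}.
              qh ah x (g x a) = (if ah = v a then 1 else 0))
          \<longrightarrow> inj_on v (supp_a p \<pi> k))"
  proof (intro impI allI)
    fix v :: "nat \<Rightarrow> nat"
    assume A: "A1 k g \<and> A2 k g \<and> A3 p \<pi> k \<and> A4 p \<pi> k"
    assume V: "(\<forall>a\<in>supp_a p \<pi> k. v a \<in> {1..kh}) \<and>
          (\<forall>(x, a)\<in>supp_xa p \<pi> k. \<forall>ah\<in>{1..kh}.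
              qh ah x (g x a) = (if ah = v a then 1 else 0))"
    have geq: "g x a = gh x (v a)" if a: "a \<in> supp_a p \<pi> k" and x: "x \<in> supp_x_given_a p \<pi> a" for a x
    proof -
      have xa: "(x, a) \<in> supp_xa p \<pi> k" using a x by (auto simp: supp_xa_def)
      have "0 = (\<Sum>ah\<in>{1..kh}. qh ah x (g x a) * (norm (g x a - gh x ah))\<^sup>2)"
        using Dz[OF _ _ a x] A by simp
      also have "\<dots> = (\<Sum>ah\<in>{1..kh}. if ah = v a then (norm (g x a - gh x ah))\<^sup>2 else 0)"
        using V xa by (intro sum.cong) auto
      also have "\<dots> = (norm (g x a - gh x (v a)))\<^sup>2" using V a by simp
      finally show ?thesis by simp
    qed
    show "inj_on v (supp_a p \<pi> k)"
    proof (rule inj_onI)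
      fix a1 a2 assume a1: "a1 \<in> supp_a p \<pi> k" and a2: "a2 \<in> supp_a p \<pi> k" and e: "v a1 = v a2"
      obtain x where x1: "x \<in> supp_x_given_a p \<pi> a1" and x2: "x \<in> supp_x_given_a p \<pi> a2"
        using A a1 a2 unfolding A4_def by blast
      have "g x a1 = g x a2" using geq[OF a1 x1] geq[OF a2 x2] e by simp
      moreover have "x \<in> unit_cube" using x1 by (simp add: supp_x_given_a_def)
      moreover have "a1 \<in> {1..k}" "a2 \<in> {1..k}" using a1 a2 by (auto simp: supp_a_def)
      ultimately show "a1 = a2" using A unfolding A2_def by blast
    qed
  qed
  show ?thesis using P1 P2 P3 by blast
qed

end
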